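(* $\mathbf{SC}(1,1)\subseteq\mathbf{SC}'(1,1)$.
   Context: For an alphabet $V$, $V^+=V^*-\{\lambda\}$, and $\mathit{alph}(w)$ is the set of symbols occurring in $w$. A semi-conditional grammar of degree $(1,1)$ is a quadruple $G=(N,T,P,S)$ where $N$ and $T$ are disjoint finite alphabets of nonterminals and terminals, $V=N\cup T$, $S\in N$, and $P$ is a finite set of productions $(A\to x,\mathit{Per},\mathit{For})$ with $A\in N$, $x\in V^+$ (no erasing productions), $\mathit{Per},\mathit{For}\subseteq V$, $|\mathit{Per}|\le1$, $|\mathit{For}|\le1$. Its language is $L(G)=\{w\in T^*:S\Rightarrow^*w\}$. $\mathbf{SC}(1,1)$ is the family of languages generated by such grammars when the derivation step $uAv\Rightarrow uxv$ ($u,v\in V^*$) by $(A\to x,\mathit{Per},\mathit{For})$ requires $\mathit{Per}\subseteq\mathit{alph}(uAv)$ and $\mathit{alph}(uAv)\cap\mathit{For}=\emptyset$. $\mathbf{SC}'(1,1)$ is the family of languages generated by such grammars when the derivation step instead requires $\mathit{Per}\subseteq\mathit{alph}(uv)$ and $\mathit{alph}(uv)\cap\mathit{For}=\emptyset$ (the rewritten occurrence of $A$ is not taken into account). *)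

theory Defs
  imports Main
begin

text \<open>A production (A -> x, Per, For) is a tuple (A, x, Per, For).
  A grammar is a tuple (N, T, P, S).\<close>

type_synonym 'a prod = "'a \<times> 'a list \<times> 'a set \<times> 'a set"
type_synonym 'a grammar = "'a set \<times> 'a set \<times> 'a prod set \<times> 'a"

definition nonterms :: "'a grammar \<Rightarrow> 'a set" where "nonterms G = fst G"
definition terms :: "'a grammar \<Rightarrow> 'a set" where "terms G = fst (snd G)"
definition prods :: "'a grammar \<Rightarrow> 'a prod set" where "prods G = fst (snd (snd G))"
definition start :: "'a grammar \<Rightarrow> 'a" where "start G = snd (snd (snd G))"

definition sc11_grammar :: "'a grammar \<Rightarrow> bool" where
  "sc11_grammar G \<longleftrightarrow>
     finite (nonterms G) \<and> finite (terms G) \<and> nonterms G \<inter> terms G = {} \<and>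
     start G \<in> nonterms G \<and> finite (prods G) \<and>
     (\<forall>(A, x, Per, For) \<in> prods G.
        A \<in> nonterms G \<and> x \<noteq> [] \<and> set x \<subseteq> nonterms G \<union> terms G \<and>
        Per \<subseteq> nonterms G \<union> terms G \<and> For \<subseteq> nonterms G \<union> terms G \<and>
        card Per \<le> 1 \<and> card For \<le> 1)"

definition sc_step :: "'a grammar \<Rightarrow> 'a list \<Rightarrow> 'a list \<Rightarrow> bool" where
  "sc_step G w w' \<longleftrightarrow> (\<exists>A x Per For u v. (A, x, Per, For) \<in> prods G \<and>
     w = u @ [A] @ v \<and> w' = u @ x @ v \<and>
     Per \<subseteq> set (u @ [A] @ v) \<and> set (u @ [A] @ v) \<inter> For = {})"

definition sc'_step :: "'a grammar \<Rightarrow> 'a list \<Rightarrow> 'a list \<Rightarrow> bool" where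
  "sc'_step G w w' \<longleftrightarrow> (\<exists>A x Per For u v. (A, x, Per, For) \<in> prods G \<and>
     w = u @ [A] @ v \<and> w' = u @ x @ v \<and>
     Per \<subseteq> set (u @ v) \<and> set (u @ v) \<inter> For = {})"

definition lang_sc :: "'a grammar \<Rightarrow> 'a list set" where
  "lang_sc G = {w. set w \<subseteq> terms G \<and> (sc_step G)\<^sup>*\<^sup>* [start G] w}"

definition lang_sc' :: "'a grammar \<Rightarrow> 'a list set" where
  "lang_sc' G = {w. set w \<subseteq> terms G \<and> (sc'_step G)\<^sup>*\<^sup>* [start G] w}"

definition SC11 :: "'a list set set" where
  "SC11 = {L. \<exists>G. sc11_grammar G \<and> L = lang_sc G}"

definition SC'11 :: "'a list set set" where
  "SC'11 = {L. \<exists>G. sc11_grammar G \<and> L = lang_sc' G}"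

end

theory Submission
  imports Defs
begin

definition tr :: "'a prod \<Rightarrow> 'a prod" where
  "tr p = (case p of (A, x, Per, For) \<Rightarrow> (A, x, Per - {A}, For))"

definition trG :: "'a grammar \<Rightarrow> 'a grammar" where
  "trG G = (nonterms G, terms G,
     tr ` {p \<in> prods G. fst p \<notin> snd (snd (snd p))}, start G)"

lemma trG_simps: "nonterms (trG G) = nonterms G" "terms (trG G) = terms G"
  "start (trG G) = start G"
  "prods (trG G) = tr ` {p \<in> prods G. fst p \<notin> snd (snd (snd p))}"
  by (simp_all add: trG_def nonterms_def terms_def start_def prods_def)

lemma trG_grammar: assumes "sc11_grammar G" shows "sc11_grammar (trG G)"
proof -
  have fin: "finite (nonterms G \<union> terms G)" using assms by (simp add: sc11_grammar_def)
  have h: "\<And>A x Per For. (A, x, Per, For) \<in> prods G \<Longrightarrow>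
       A \<in> nonterms G \<and> x \<noteq> [] \<and> set x \<subseteq> nonterms G \<union> terms G \<and>
       Per \<subseteq> nonterms G \<union> terms G \<and> For \<subseteq> nonterms G \<union> terms G \<and>
       card Per \<le> 1 \<and> card For \<le> 1"
    using assms unfolding sc11_grammar_def by fast
  have c: "card (Per - {A}) \<le> 1" if p: "(A, x, Per, For) \<in> prods G" for A x Per For
  proof -
    have "Per \<subseteq> nonterms G \<union> terms G" "card Per \<le> 1" using h[OF p] by auto
    then have "finite Per" using fin finite_subset by blast
    then show ?thesis using \<open>card Per \<le> 1\<close>
      by (meson card_Diff1_le order_trans)
  qed
  have fp: "finite (prods G)" using assms by (simp add: sc11_grammar_def)
  show ?thesis
    using assms unfolding sc11_grammar_def trG_simps
    apply (intro conjI)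
    apply (simp_all add: fp)
    apply (clarsimp simp: tr_def)
    using h c by fastforce
qed

lemma step_eq: "sc'_step (trG G) = sc_step G"
proof (intro ext iffI)
  fix w w'
  assume "sc'_step (trG G) w w'"
  then obtain A x Per For u v where p: "(A, x, Per, For) \<in> prods (trG G)"
    and e: "w = u @ [A] @ v" "w' = u @ x @ v" "Per \<subseteq> set (u @ v)" "set (u @ v) \<inter> For = {}"
    unfolding sc'_step_def by blast
  from p obtain Per0 where p0: "(A, x, Per0, For) \<in> prods G" "A \<notin> For" "Per = Per0 - {A}"
    by (auto simp: trG_simps tr_def)
  show "sc_step G w w'" unfolding sc_step_def
    using p0 e by (intro exI[of _ A] exI[of _ x] exI[of _ Per0] exI[of _ For] exI[of _ u] exI[of _ v]) auto
next
  fix w w'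
  assume "sc_step G w w'"
  then obtain A x Per For u v where p: "(A, x, Per, For) \<in> prods G"
    and e: "w = u @ [A] @ v" "w' = u @ x @ v" "Per \<subseteq> set (u @ [A] @ v)" "set (u @ [A] @ v) \<inter> For = {}"
    unfolding sc_step_def by blast
  have "(A, x, Per - {A}, For) \<in> prods (trG G)"
    using p e by (auto simp: trG_simps tr_def image_iff intro!: bexI[of _ "(A, x, Per, For)"])
  then show "sc'_step (trG G) w w'" unfolding sc'_step_def
    using e by (intro exI[of _ A] exI[of _ x] exI[of _ "Per - {A}"] exI[of _ For] exI[of _ u] exI[of _ v]) auto
qed

theorem corollary2:
  assumes "infinite (UNIV :: 'a set)"
  shows "(SC11 :: 'a list set set) \<subseteq> SC'11"
proof
  fix L :: "'a list set" assume "L \<in> SC11"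
  then obtain G where G: "sc11_grammar G" "L = lang_sc G" by (auto simp: SC11_def)
  have "lang_sc' (trG G) = lang_sc G"
    by (simp add: lang_sc'_def lang_sc_def step_eq trG_simps)
  then show "L \<in> SC'11" using G trG_grammar[OF G(1)] unfolding SC'11_def by (metis (mono_tags) mem_Collect_eq)
qed

end
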